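(* Let $H=(U,(A_1,\dots,A_m))$ be a harmonic set system with $|U|<m(m-2)$ and $m\ge 51$. Then for any two nonconsecutive sets $I,J\subseteq[m]$ of size $3$, $H_{I,J}=\emptyset$.
   Context: For $I_1,I_2\subseteq[m]$, $H_{I_1,I_2}=\bigcap_{i\in I_1}A_i\cap\bigcap_{i\in I_2}(U\setminus A_i)$ (empty intersection $=U$), $H_I=H_{I,\emptyset}$. The run decomposition of a finite set $I$ of positive integers is the partition of sizes, in nonincreasing order, of the maximal runs of consecutive integers in $I$. $H$ is harmonic if $|H_I|=|H_J|$ whenever $I,J\subseteq[m]$ have the same run decomposition. A set of integers is nonconsecutive if no two distinct elements differ by exactly $1$. *)

theory Defs
  imports Main "HOL-Library.Multiset"
begin

text \<open>Set system: ground set U, sets A 1, ..., A m (indices in {1..m}).\<close>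

definition Hcell :: "'a set \<Rightarrow> (nat \<Rightarrow> 'a set) \<Rightarrow> nat set \<Rightarrow> nat set \<Rightarrow> 'a set" where
  "Hcell U A I1 I2 = {x \<in> U. (\<forall>i\<in>I1. x \<in> A i) \<and> (\<forall>i\<in>I2. x \<in> U - A i)}"

definition runs :: "nat set \<Rightarrow> nat set set" where
  "runs I = {R. \<exists>a b. a \<le> b \<and> R = {a..b} \<and> R \<subseteq> I \<and> Suc b \<notin> I
                   \<and> (\<forall>c. Suc c = a \<longrightarrow> c \<notin> I)}"

definition run_decomp :: "nat set \<Rightarrow> nat multiset" where
  "run_decomp I = image_mset card (mset_set (runs I))"

definition harmonic :: "'a set \<Rightarrow> (nat \<Rightarrow> 'a set) \<Rightarrow> nat \<Rightarrow> bool" where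
  "harmonic U A m \<longleftrightarrow> (\<forall>I J. I \<subseteq> {1..m} \<longrightarrow> J \<subseteq> {1..m} \<longrightarrow>
       run_decomp I = run_decomp J \<longrightarrow> card (Hcell U A I {}) = card (Hcell U A J {}))"

definition nonconsecutive :: "nat set \<Rightarrow> bool" where
  "nonconsecutive I \<longleftrightarrow> (\<forall>i\<in>I. \<forall>j\<in>I. i \<noteq> Suc j)"

end

theory Submission imports Defs "HOL.Binomial_Plus" begin

lemma runs_nc:
  assumes "nonconsecutive X"
  shows "runs X = (\<lambda>x. {x}) ` X"
proof
  show "runs X \<subseteq> (\<lambda>x. {x}) ` X"
  proof
    fix R assume "R \<in> runs X"
    then obtain a b where ab: "a \<le> b" "R = {a..b}" "R \<subseteq> X" unfolding runs_def by blast
    have "a = b"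
    proof (rule ccontr)
      assume "a \<noteq> b"
      then have "a \<in> X" "Suc a \<in> X" using ab by auto
      then show False using assms unfolding nonconsecutive_def by blast
    qed
    then show "R \<in> (\<lambda>x. {x}) ` X" using ab by auto
  qed
next
  show "(\<lambda>x. {x}) ` X \<subseteq> runs X"
  proof
    fix R assume "R \<in> (\<lambda>x. {x}) ` X"
    then obtain x where x: "x \<in> X" "R = {x}" by blast
    have "Suc x \<notin> X" "\<forall>c. Suc c = x \<longrightarrow> c \<notin> X"
      using assms x unfolding nonconsecutive_def by auto
    then show "R \<in> runs X" unfolding runs_def using x
      by (intro CollectI exI[of _ x]) auto
  qed
qed

lemma rd_nc:
  assumes "nonconsecutive X"
  shows "run_decomp X = replicate_mset (card X) 1"
proof -
  have inj: "inj_on (\<lambda>x. {x}) X" by (auto simp: inj_on_def)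
  have "run_decomp X = image_mset card (mset_set ((\<lambda>x. {x}) ` X))"
    unfolding run_decomp_def runs_nc[OF assms] ..
  also have "\<dots> = image_mset card (image_mset (\<lambda>x. {x}) (mset_set X))"
    using image_mset_mset_set[OF inj] by simp
  also have "\<dots> = image_mset (\<lambda>_. 1) (mset_set X)"
    by (simp add: multiset.map_comp comp_def)
  also have "\<dots> = replicate_mset (card X) 1"
    by (simp add: image_mset_const_eq)
  finally show ?thesis .
qed

lemma cell_split:
  assumes "finite U"
  shows "card (Hcell U A K L) = card (Hcell U A K (insert x L)) + card (Hcell U A (insert x K) L)"
proof -
  have e: "Hcell U A K L = Hcell U A K (insert x L) \<union> Hcell U A (insert x K) L"
    unfolding Hcell_def by auto
  have d: "Hcell U A K (insert x L) \<inter> Hcell U A (insert x K) L = {}"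
    unfolding Hcell_def by auto
  have f: "finite (Hcell U A K (insert x L))" "finite (Hcell U A (insert x K) L)"
    using assms unfolding Hcell_def by auto
  show ?thesis unfolding e using card_Un_disjoint[OF f d] .
qed

lemma nc_subset: "nonconsecutive X \<Longrightarrow> Y \<subseteq> X \<Longrightarrow> nonconsecutive Y"
  unfolding nonconsecutive_def by blast

lemma nc_cells_eq:
  assumes "finite U" "harmonic U A m"
  shows "\<And>K L K' L'. card L = n \<Longrightarrow> card L' = n \<Longrightarrow> K \<inter> L = {} \<Longrightarrow> K' \<inter> L' = {} \<Longrightarrow>
     K \<union> L \<subseteq> {1..m} \<Longrightarrow> K' \<union> L' \<subseteq> {1..m} \<Longrightarrow> nonconsecutive (K \<union> L) \<Longrightarrow>
     nonconsecutive (K' \<union> L') \<Longrightarrow> card K = card K' \<Longrightarrow>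
     card (Hcell U A K L) = card (Hcell U A K' L')"
proof (induction n)
  case 0
  have fin: "finite L" "finite L'" "finite K" "finite K'" using 0 finite_subset[OF _ finite_atLeastAtMost] by auto
  then have "L = {}" "L' = {}" using 0 by auto
  have n1: "nonconsecutive K" "nonconsecutive K'" using 0 by (auto intro: nc_subset)
  have "run_decomp K = run_decomp K'" using rd_nc[OF n1(1)] rd_nc[OF n1(2)] 0 by simp
  moreover have "K \<subseteq> {1..m}" "K' \<subseteq> {1..m}" using 0 by auto
  ultimately have "card (Hcell U A K {}) = card (Hcell U A K' {})"
    using assms(2) unfolding harmonic_def by blast
  then show ?case using \<open>L = {}\<close> \<open>L' = {}\<close> by simp
next
  case (Suc n)
  have fin: "finite L" "finite L'" "finite K" "finite K'" using Suc.prems finite_subset[OF _ finite_atLeastAtMost] by auto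
  obtain x where x: "x \<in> L" using Suc.prems by fastforce
  obtain x' where x': "x' \<in> L'" using Suc.prems by fastforce
  define L1 where "L1 = L - {x}"
  define L1' where "L1' = L' - {x'}"
  have L: "L = insert x L1" "L' = insert x' L1'" using x x' L1_def L1'_def by auto
  have c1: "card L1 = n" "card L1' = n" using Suc.prems fin x x' L1_def L1'_def by auto
  have s1: "card (Hcell U A K L1) = card (Hcell U A K L) + card (Hcell U A (insert x K) L1)"
    using cell_split[OF assms(1)] L by metis
  have s2: "card (Hcell U A K' L1') = card (Hcell U A K' L') + card (Hcell U A (insert x' K') L1')"
    using cell_split[OF assms(1)] L by metis
  have e1: "card (Hcell U A K L1) = card (Hcell U A K' L1')"
  proof (rule Suc.IH[OF c1])
    show "K \<inter> L1 = {}" "K' \<inter> L1' = {}" using Suc.prems(3,4) L by blast+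
    show "K \<union> L1 \<subseteq> {1..m}" "K' \<union> L1' \<subseteq> {1..m}" using Suc.prems(5,6) L by blast+
    show "nonconsecutive (K \<union> L1)" by (rule nc_subset[OF Suc.prems(7)]) (use L in blast)
    show "nonconsecutive (K' \<union> L1')" by (rule nc_subset[OF Suc.prems(8)]) (use L in blast)
    show "card K = card K'" using Suc.prems(9) .
  qed
  have "x \<notin> K" using Suc.prems(3) x by blast
  have "x' \<notin> K'" using Suc.prems(4) x' by blast
  have "x \<notin> L1" "x' \<notin> L1'" unfolding L1_def L1'_def by auto
  have ck: "card (insert x K) = card (insert x' K')"
    using fin(3,4) Suc.prems(9) \<open>x \<notin> K\<close> \<open>x' \<notin> K'\<close> by simp
  have e2: "card (Hcell U A (insert x K) L1) = card (Hcell U A (insert x' K') L1')"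
  proof (rule Suc.IH[OF c1 _ _ _ _ _ _ ck])
    show "insert x K \<inter> L1 = {}" "insert x' K' \<inter> L1' = {}"
      using Suc.prems(3,4) L \<open>x \<notin> L1\<close> \<open>x' \<notin> L1'\<close> by auto 
    show "insert x K \<union> L1 \<subseteq> {1..m}" "insert x' K' \<union> L1' \<subseteq> {1..m}" using Suc.prems(5,6) L by blast+
    show "nonconsecutive (insert x K \<union> L1)" by (rule nc_subset[OF Suc.prems(7)]) (use L in blast)
    show "nonconsecutive (insert x' K' \<union> L1')" by (rule nc_subset[OF Suc.prems(8)]) (use L in blast)
  qed
  show ?case using s1 s2 e1 e2 by linarith
qed


lemma nc_card_bound:
  assumes "nonconsecutive X" "X \<subseteq> {1..m}"
  shows "2 * card X \<le> m + 1"
proof -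
  have inj: "inj_on (\<lambda>x. (x + 1) div 2) X"
  proof (rule inj_onI)
    fix x y assume xy: "x \<in> X" "y \<in> X" "(x + 1) div 2 = (y + 1) div 2"
    then have "x = y \<or> x = Suc y \<or> y = Suc x" by presburger
    then show "x = y" using xy assms(1) unfolding nonconsecutive_def by blast
  qed
  have "(\<lambda>x. (x + 1) div 2) ` X \<subseteq> {1..(m+1) div 2}"
  proof
    fix y assume "y \<in> (\<lambda>x. (x + 1) div 2) ` X"
    then obtain x where x: "x \<in> X" "y = (x + 1) div 2" by blast
    then have "1 \<le> x" "x \<le> m" using assms(2) by auto
    then have "1 \<le> (x + 1) div 2" "(x + 1) div 2 \<le> (m + 1) div 2" by (presburger, simp add: div_le_mono)
    then show "y \<in> {1..(m+1) div 2}" using x by simp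
  qed
  then have "card ((\<lambda>x. (x + 1) div 2) ` X) \<le> (m+1) div 2"
    using card_mono[of "{1..(m+1) div 2}"] by fastforce
  then have "card X \<le> (m+1) div 2" using card_image[OF inj] by simp
  then show ?thesis by linarith
qed

definition oddset :: "nat \<Rightarrow> nat \<Rightarrow> nat set" where
  "oddset a b = (\<lambda>i. 2 * i + 1) ` {a..<b}"

lemma oddset_card [simp]: "card (oddset a b) = b - a"
  unfolding oddset_def by (subst card_image) (auto simp: inj_on_def)

lemma oddset_finite [simp]: "finite (oddset a b)"
  unfolding oddset_def by simp

lemma oddset_odd: "x \<in> oddset a b \<Longrightarrow> odd x"
  unfolding oddset_def by auto

lemma odd_nc: "(\<And>x. x \<in> X \<Longrightarrow> odd x) \<Longrightarrow> nonconsecutive X"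
  unfolding nonconsecutive_def by (metis even_Suc)

lemma oddset_sub: "2 * b \<le> m + 1 \<Longrightarrow> oddset a b \<subseteq> {1..m}"
  unfolding oddset_def by auto

lemma oddset_un: "a \<le> b \<Longrightarrow> b \<le> c \<Longrightarrow> oddset a b \<union> oddset b c = oddset a c"
  unfolding oddset_def by (auto simp: image_Un[symmetric] ivl_disj_un)

lemma oddset_disj: "oddset a b \<inter> oddset b c = {}"
  unfolding oddset_def by auto

lemma oddset_insert: "a \<le> b \<Longrightarrow> insert (2 * b + 1) (oddset a b) = oddset a (Suc b)"
  unfolding oddset_def by (auto simp: atLeastLessThanSuc)

definition cc :: "'a set \<Rightarrow> (nat \<Rightarrow> 'a set) \<Rightarrow> nat \<Rightarrow> nat \<Rightarrow> nat" where
  "cc U A k l = card (Hcell U A (oddset 0 k) (oddset k (k + l)))"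

lemma cell_cc:
  assumes "finite U" "harmonic U A m" "K \<inter> L = {}" "K \<union> L \<subseteq> {1..m}" "nonconsecutive (K \<union> L)"
  shows "card (Hcell U A K L) = cc U A (card K) (card L)"
proof -
  have fin: "finite K" "finite L" using assms(4) finite_subset[OF _ finite_atLeastAtMost] by auto
  have b: "2 * (card K + card L) \<le> m + 1"
    using nc_card_bound[OF assms(5,4)] card_Un_disjoint[OF fin assms(3)] by simp
  show ?thesis unfolding cc_def
  proof (rule nc_cells_eq[OF assms(1,2) refl])
    show "card (oddset (card K) (card K + card L)) = card L" by simp
    show "K \<inter> L = {}" "K \<union> L \<subseteq> {1..m}" "nonconsecutive (K \<union> L)" by fact+
    show "oddset 0 (card K) \<inter> oddset (card K) (card K + card L) = {}" by (rule oddset_disj)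
    have u: "oddset 0 (card K) \<union> oddset (card K) (card K + card L) = oddset 0 (card K + card L)"
      by (rule oddset_un) auto
    show "oddset 0 (card K) \<union> oddset (card K) (card K + card L) \<subseteq> {1..m}"
      unfolding u using b by (intro oddset_sub) simp
    show "nonconsecutive (oddset 0 (card K) \<union> oddset (card K) (card K + card L))"
      unfolding u by (rule odd_nc) (rule oddset_odd)
    show "card K = card (oddset 0 (card K))" by simp
  qed
qed

lemma cc_pascal:
  assumes "finite U" "harmonic U A m" "2 * (k + l + 1) \<le> m + 1"
  shows "cc U A k l = cc U A k (Suc l) + cc U A (Suc k) l"
proof -
  define x where "x = 2 * (k + l) + 1"
  have s: "cc U A k l = card (Hcell U A (oddset 0 k) (insert x (oddset k (k + l))))
     + card (Hcell U A (insert x (oddset 0 k)) (oddset k (k + l)))"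
    unfolding cc_def by (rule cell_split[OF assms(1)])
  have 1: "insert x (oddset k (k + l)) = oddset k (k + Suc l)"
    unfolding x_def using oddset_insert[of k "k + l"] by simp
  have xn: "x \<notin> oddset 0 k" unfolding x_def oddset_def by auto
  have "card (Hcell U A (insert x (oddset 0 k)) (oddset k (k + l))) = cc U A (card (insert x (oddset 0 k))) (card (oddset k (k + l)))"
  proof (rule cell_cc[OF assms(1,2)])
    show "insert x (oddset 0 k) \<inter> oddset k (k + l) = {}"
      using oddset_disj[of 0 k "k+l"] unfolding x_def oddset_def by auto
    have u: "insert x (oddset 0 k) \<union> oddset k (k + l) = oddset 0 (Suc (k + l))"
      using oddset_un[of 0 k "k + l"] oddset_insert[of 0 "k + l"] unfolding x_def by auto
    show "insert x (oddset 0 k) \<union> oddset k (k + l) \<subseteq> {1..m}"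
      unfolding u using assms(3) by (intro oddset_sub) simp
    show "nonconsecutive (insert x (oddset 0 k) \<union> oddset k (k + l))"
      unfolding u by (rule odd_nc) (rule oddset_odd)
  qed
  also have "\<dots> = cc U A (Suc k) l" using xn by (simp add: card_insert_if)
  finally show ?thesis using s 1 unfolding cc_def by simp
qed

lemma binom_shift_sum:
  fixes g :: "nat \<Rightarrow> nat"
  shows "(\<Sum>i\<le>Suc t. (Suc t choose i) * g i) = (\<Sum>i\<le>t. (t choose i) * g i) + (\<Sum>i\<le>t. (t choose i) * g (Suc i))"
proof -
  have "(\<Sum>i\<le>Suc t. (Suc t choose i) * g i) = g 0 + (\<Sum>i\<le>t. (Suc t choose Suc i) * g (Suc i))"
    by (subst sum.atMost_Suc_shift) simp
  also have "\<dots> = g 0 + (\<Sum>i\<le>t. (t choose Suc i) * g (Suc i)) + (\<Sum>i\<le>t. (t choose i) * g (Suc i))"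
    by (simp add: sum.distrib algebra_simps)
  also have "(\<Sum>i\<le>t. (t choose Suc i) * g (Suc i)) = (\<Sum>i<t. (t choose Suc i) * g (Suc i))"
    by (simp add: lessThan_Suc_atMost[symmetric])
  also have "g 0 + \<dots> = (\<Sum>i\<le>t. (t choose i) * g i)"
    by (subst sum.atMost_shift) simp
  finally show ?thesis .
qed

lemma cc_iter:
  assumes "finite U" "harmonic U A m"
  shows "2 * (k + l + t) \<le> m + 1 \<Longrightarrow> cc U A k l = (\<Sum>i\<le>t. (t choose i) * cc U A (k + i) (l + t - i))"
proof (induction t arbitrary: k l)
  case 0 then show ?case by simp
next
  case (Suc t)
  define g where "g i = cc U A (k + i) (l + Suc t - i)" for i
  have p: "cc U A k l = cc U A k (Suc l) + cc U A (Suc k) l"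
    using cc_pascal[OF assms] Suc.prems by simp
  have a: "cc U A k (Suc l) = (\<Sum>i\<le>t. (t choose i) * g i)"
    using Suc.IH[of k "Suc l"] Suc.prems unfolding g_def
    by (simp add: Suc_diff_le)
  have b: "cc U A (Suc k) l = (\<Sum>i\<le>t. (t choose i) * g (Suc i))"
    using Suc.IH[of "Suc k" l] Suc.prems unfolding g_def by simp
  show ?case using p a b binom_shift_sum[of t g] unfolding g_def by simp
qed


lemma choose3: "6 * (n choose 3) = n * (n - 1) * (n - 2)"
proof -
  have a: "3 * (n choose 3) = (n - 2) * (n choose 2)"
    using binomial_absorption[of 2 n] binomial_absorb_comp[of n 2] by (simp add: numeral_eq_Suc)
  have b: "2 * (n choose 2) = n * (n - 1)"
    using binomial_absorption[of 1 n] binomial_absorb_comp[of n 1] by (simp add: numeral_eq_Suc)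
  have "6 * (n choose 3) = 2 * ((n - 2) * (n choose 2))" using a by simp
  also have "\<dots> = (n - 2) * (2 * (n choose 2))" by simp
  also have "\<dots> = n * (n - 1) * (n - 2)" using b by simp
  finally show ?thesis .
qed

lemma choose4: "4 * (n choose 4) = (n - 3) * (n choose 3)"
  using binomial_absorption[of 3 n] binomial_absorb_comp[of n 3] by (simp add: numeral_eq_Suc)

lemma binom_ge:
  assumes "a \<le> j" "j + a \<le> R"
  shows "R choose a \<le> R choose j"
proof (cases "2 * j \<le> R")
  case True then show ?thesis using binomial_mono[OF assms(1)] by simp
next
  case False
  have "R choose j = R choose (R - j)" using assms by (intro binomial_symmetric) simp
  moreover have "R choose a \<le> R choose (R - j)"
    using False assms by (intro binomial_mono) auto
  ultimately show ?thesis by simp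
qed

lemma numeric:
  assumes "m \<ge> 51" "R = (m + 1) div 2" "3 \<le> k" "3 \<le> l" "k + l + t = R" "t \<le> 3" "i \<le> t"
  shows "m * (m - 2) * (t choose i) \<le> R choose (k + i)"
proof -
  have R26: "R \<ge> 26" using assms(1,2) by simp
  have mR: "m \<le> 2 * R" using assms(2) by simp
  have "m * (m - 2) \<le> (2 * R) * (2 * R - 2)" using mR by (intro mult_le_mono) auto
  also have "\<dots> = 4 * (R * (R - 1))" by (simp add: algebra_simps)
  finally have m1: "m * (m - 2) \<le> 4 * (R * (R - 1))" .
  have "24 * (R * (R - 1)) \<le> (R - 2) * (R * (R - 1))" using R26 by (intro mult_right_mono) auto
  also have "\<dots> = 6 * (R choose 3)" using choose3[of R] by (simp add: algebra_simps)
  finally have c3: "m * (m - 2) \<le> R choose 3" using m1 by linarith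
  have "12 * (R choose 3) \<le> (R - 3) * (R choose 3)" using R26 by (intro mult_right_mono) auto
  also have "\<dots> = 4 * (R choose 4)" using choose4[of R] by simp
  finally have c4: "3 * (m * (m - 2)) \<le> R choose 4" using c3 by linarith
  show ?thesis
  proof (cases "i = 0 \<or> i = t")
    case True
    then have "t choose i = 1" by auto
    moreover have "R choose 3 \<le> R choose (k + i)" using True assms by (intro binom_ge) auto
    ultimately show ?thesis using c3 by simp
  next
    case False
    then have ti: "(t = 2 \<and> i = 1) \<or> (t = 3 \<and> i = 1) \<or> (t = 3 \<and> i = 2)" using assms by auto
    then have "t choose i \<le> 3" by (auto simp: numeral_eq_Suc)
    then have "m * (m - 2) * (t choose i) \<le> m * (m - 2) * 3" by (intro mult_left_mono) auto
    moreover have "R choose 4 \<le> R choose (k + i)" using ti assms by (intro binom_ge) auto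
    ultimately show ?thesis using c4 by linarith
  qed
qed


lemma odd_in_oddset:
  assumes "odd x" "x \<le> m"
  shows "x \<in> oddset 0 ((m + 1) div 2)"
proof -
  obtain i where i: "x = 2 * i + 1" using assms(1) oddE by blast
  then have "i < (m + 1) div 2" using assms(2) by simp
  then show ?thesis unfolding oddset_def using i by auto
qed

lemma Dcons:
  assumes "nonconsecutive I" "I \<subseteq> {1..m}" "card I = 3"
  defines "Od \<equiv> oddset 0 ((m + 1) div 2)"
  defines "N \<equiv> Suc ` I \<union> (\<lambda>i. i - 1) ` I"
  defines "D \<equiv> (Od - N) \<union> I"
  shows "nonconsecutive D" "D \<subseteq> {1..m}" "(m + 1) div 2 \<le> card D + 3" "card N \<le> 6"
proof -
  have finI: "finite I" using assms(3) card.infinite by fastforce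
  have Osub: "Od \<subseteq> {1..m}" unfolding Od_def by (rule oddset_sub) simp
  have Oodd: "\<And>x. x \<in> Od \<Longrightarrow> odd x" unfolding Od_def by (rule oddset_odd)
  show "D \<subseteq> {1..m}" unfolding D_def using Osub assms(2) by blast
  show "nonconsecutive D" unfolding nonconsecutive_def
  proof (intro ballI)
    fix x y assume x: "x \<in> D" and y: "y \<in> D"
    show "x \<noteq> Suc y"
    proof
      assume xy: "x = Suc y"
      consider "x \<in> Od" "y \<in> Od" | "x \<in> I" "y \<in> I" | "x \<in> Od - N" "y \<in> I" | "x \<in> I" "y \<in> Od - N"
        using x y unfolding D_def by blast
      then show False
      proof cases
        case 1 then show False using Oodd xy by (metis even_Suc)
      next
        case 2 then show False using assms(1) xy unfolding nonconsecutive_def by blast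
      next
        case 3 then show False using xy unfolding N_def by blast
      next
        case 4
        then have "y = x - 1" using xy by simp
        then have "y \<in> N" unfolding N_def using 4 by blast
        then show False using 4 by blast
      qed
    qed
  qed
  have cN: "card N \<le> 2 * card I"
  proof -
    have "card N \<le> card (Suc ` I) + card ((\<lambda>i. i - 1) ` I)"
      unfolding N_def by (rule card_Un_le)
    moreover have "card (Suc ` I) \<le> card I" "card ((\<lambda>i. i - 1) ` I) \<le> card I"
      by (rule card_image_le[OF finI])+
    ultimately show ?thesis by linarith
  qed
  then show "card N \<le> 6" using assms(3) by simp
  define E where "E = I - Od"
  have finO: "finite Od" unfolding Od_def by simp
  have cO: "card Od = (m + 1) div 2" unfolding Od_def by simp
  have NO: "Od \<inter> N \<subseteq> Suc ` E \<union> (\<lambda>i. i - 1) ` E"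
  proof
    fix y assume y: "y \<in> Od \<inter> N"
    then have oy: "odd y" using Oodd by blast
    from y obtain i where i: "i \<in> I" "y = Suc i \<or> y = i - 1" unfolding N_def by blast
    have "1 \<le> i" using i assms(2) by auto
    then have "even i" using i(2) oy by (elim disjE; simp; presburger)
    then have "i \<in> E" unfolding E_def using i Oodd by blast
    then show "y \<in> Suc ` E \<union> (\<lambda>i. i - 1) ` E" using i by blast
  qed
  have finE: "finite E" unfolding E_def using finI by simp
  have "card (Od \<inter> N) \<le> card (Suc ` E \<union> (\<lambda>i. i - 1) ` E)"
    by (rule card_mono[OF _ NO]) (simp add: finE)
  also have "\<dots> \<le> card (Suc ` E) + card ((\<lambda>i. i - 1) ` E)" by (rule card_Un_le)
  also have "\<dots> \<le> 2 * card E" using card_image_le[OF finE, of Suc] card_image_le[OF finE, of "\<lambda>i. i - 1"] by linarith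
  finally have cON: "card (Od \<inter> N) \<le> 2 * card E" .
  have "card E \<le> 3" unfolding E_def using assms(3) finI by (metis card_Diff_subset_Int card_mono Diff_subset finI) 
  have split: "card Od = card (Od - N) + card (Od \<inter> N)"
    using card_Un_disjoint[of "Od - N" "Od \<inter> N"] finO by (simp add: Un_Diff_Int Diff_Int_distrib2 inf_assoc)
  have "(Od - N) \<union> E \<subseteq> D" unfolding D_def E_def by blast
  moreover have "(Od - N) \<inter> E = {}" unfolding E_def by blast
  ultimately have "card (Od - N) + card E \<le> card D"
    using card_Un_disjoint[of "Od - N" E] card_mono[of D "(Od - N) \<union> E"] finO finE finI
    unfolding D_def by auto
  then show "(m + 1) div 2 \<le> card D + 3" using split cO cON \<open>card E \<le> 3\<close> by linarith
qed


lemma card_le_Diff_plus: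
  assumes "finite X" "finite N"
  shows "card X \<le> card (X - N) + card N"
proof -
  have "X \<subseteq> (X - N) \<union> N" by blast
  then have "card X \<le> card ((X - N) \<union> N)" using assms by (intro card_mono) auto
  also have "\<dots> \<le> card (X - N) + card N" by (rule card_Un_le)
  finally show ?thesis .
qed

lemma main_from_D:
  assumes "finite U" "harmonic U A m" "m \<ge> 51" "x0 \<in> U"
    and "nonconsecutive D" "D \<subseteq> {1..m}" "(m + 1) div 2 \<le> card D + 3"
    and "card (D \<inter> T0) \<ge> 3" "card (D - T0) \<ge> 3"
    and "T0 = {i. x0 \<in> A i}"
  shows "m * (m - 2) \<le> card U"
proof -
  define R where "R = (m + 1) div 2"
  define K where "K = D \<inter> T0"
  define L where "L = D - T0"
  define k where "k = card K"
  define l where "l = card L"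
  have finD: "finite D" using assms(6) finite_subset by blast
  have KL: "K \<inter> L = {}" "K \<union> L = D" unfolding K_def L_def by auto
  have kl: "k + l = card D" unfolding k_def l_def using card_Un_disjoint[of K L] KL finD by auto
  have "2 * card D \<le> m + 1" by (rule nc_card_bound[OF assms(5,6)])
  then have klR: "k + l \<le> R" unfolding R_def using kl by linarith
  define t where "t = R - (k + l)"
  have t3: "t \<le> 3" unfolding t_def R_def using assms(7) kl by linarith
  have sumR: "k + l + t = R" unfolding t_def using klR by simp
  have k3: "3 \<le> k" "3 \<le> l" unfolding k_def l_def K_def L_def using assms(8,9) by auto
  have x0: "x0 \<in> Hcell U A K L" unfolding Hcell_def K_def L_def using assms(4,10) by auto
  have finH: "finite (Hcell U A K L)" unfolding Hcell_def using assms(1) by simp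
  have one: "1 \<le> card (Hcell U A K L)" using x0 finH by (simp add: Suc_le_eq card_gt_0_iff) blast
  have "card (Hcell U A K L) = cc U A k l" unfolding k_def l_def
    by (rule cell_cc[OF assms(1,2) KL(1)]) (use KL assms(5,6) in auto)
  also have "\<dots> = (\<Sum>i\<le>t. (t choose i) * cc U A (k + i) (l + t - i))"
    by (rule cc_iter[OF assms(1,2)]) (use sumR R_def in simp)
  finally have one': "1 \<le> (\<Sum>i\<le>t. (t choose i) * cc U A (k + i) (l + t - i))" using one by simp
  have "m * (m - 2) \<le> m * (m - 2) * (\<Sum>i\<le>t. (t choose i) * cc U A (k + i) (l + t - i))"
    using one' by simp
  also have "\<dots> = (\<Sum>i\<le>t. (m * (m - 2) * (t choose i)) * cc U A (k + i) (R - (k + i)))"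
    by (simp add: sum_distrib_left algebra_simps sumR[symmetric])
  also have "\<dots> \<le> (\<Sum>i\<le>t. (R choose (k + i)) * cc U A (k + i) (R - (k + i)))"
    by (intro sum_mono mult_right_mono numeric[OF assms(3) R_def k3 sumR t3]) auto
  also have "\<dots> = (\<Sum>j\<in>(\<lambda>i. k + i) ` {..t}. (R choose j) * cc U A j (R - j))"
    by (subst sum.reindex) (auto simp: inj_on_def)
  also have "\<dots> \<le> (\<Sum>j\<le>R. (R choose j) * cc U A j (R - j))"
    by (rule sum_mono2) (use sumR in auto)
  also have "\<dots> = cc U A 0 0"
    using cc_iter[OF assms(1,2), of 0 0 R] unfolding R_def by simp
  also have "\<dots> = card U" unfolding cc_def oddset_def Hcell_def by simp
  finally show ?thesis .
qed

theorem proposition4p24: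
  fixes U :: "'a set" and A :: "nat \<Rightarrow> 'a set" and m :: nat
  assumes "finite U"
    and "\<forall>i\<in>{1..m}. A i \<subseteq> U"
    and "harmonic U A m"
    and "card U < m * (m - 2)"
    and "m \<ge> 51"
    and "I \<subseteq> {1..m}" and "J \<subseteq> {1..m}"
    and "card I = 3" and "card J = 3"
    and "nonconsecutive I" and "nonconsecutive J"
  shows "Hcell U A I J = {}"
proof (rule ccontr)
  assume "Hcell U A I J \<noteq> {}"
  then obtain x0 where x0: "x0 \<in> Hcell U A I J" by blast
  define T0 where "T0 = {i. x0 \<in> A i}"
  have xU: "x0 \<in> U" using x0 unfolding Hcell_def by simp
  have IT: "I \<subseteq> T0" using x0 unfolding Hcell_def T0_def by auto
  have JT: "J \<inter> T0 = {}" using x0 unfolding Hcell_def T0_def by auto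
  define Od where "Od = oddset 0 ((m + 1) div 2)"
  have cO: "card Od = (m + 1) div 2" unfolding Od_def by simp
  have finO: "finite Od" unfolding Od_def by simp
  have R26: "(m + 1) div 2 \<ge> 26" using assms(5) by simp
  show False
  proof (cases "card (Od - T0) \<ge> 9")
    case True
    define N where "N = Suc ` I \<union> (\<lambda>i. i - 1) ` I"
    define D where "D = (Od - N) \<union> I"
    note DC = Dcons[OF assms(10,6,8), folded Od_def N_def D_def]
    have finD: "finite D" using finite_subset[OF DC(2) finite_atLeastAtMost] .
    have "I \<subseteq> D \<inter> T0" unfolding D_def using IT by blast
    then have "card (D \<inter> T0) \<ge> 3"
      using card_mono[of "D \<inter> T0" I] assms(8) finD by simp
    moreover have "card (D - T0) \<ge> 3"
    proof -
      have "(Od - T0) - N \<subseteq> D - T0" unfolding D_def by blast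
      then have "card ((Od - T0) - N) \<le> card (D - T0)"
        using finD by (intro card_mono) auto
      moreover have "card (Od - T0) \<le> card ((Od - T0) - N) + card N"
        using card_le_Diff_plus[of "Od - T0" N] finO N_def assms(6) finite_subset[OF assms(6) finite_atLeastAtMost] by simp
      ultimately show ?thesis using True DC(4) by linarith
    qed
    ultimately have "m * (m - 2) \<le> card U"
      by (rule main_from_D[OF assms(1,3,5) xU DC(1,2,3) _ _ T0_def])
    then show False using assms(4) by simp
  next
    case False
    define N where "N = Suc ` J \<union> (\<lambda>i. i - 1) ` J"
    define D where "D = (Od - N) \<union> J"
    note DC = Dcons[OF assms(11,7,9), folded Od_def N_def D_def]
    have finD: "finite D" using finite_subset[OF DC(2) finite_atLeastAtMost] .
    have "J \<subseteq> D - T0" unfolding D_def using JT by blast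
    then have "card (D - T0) \<ge> 3"
      using card_mono[of "D - T0" J] assms(9) finD by simp
    moreover have "card (D \<inter> T0) \<ge> 3"
    proof -
      have "(Od \<inter> T0) - N \<subseteq> D \<inter> T0" unfolding D_def by blast
      then have "card ((Od \<inter> T0) - N) \<le> card (D \<inter> T0)"
        using finD by (intro card_mono) auto
      moreover have "card (Od \<inter> T0) \<le> card ((Od \<inter> T0) - N) + card N"
        using card_le_Diff_plus[of "Od \<inter> T0" N] finO N_def finite_subset[OF assms(7) finite_atLeastAtMost] by simp
      moreover have "card Od = card (Od \<inter> T0) + card (Od - T0)"
      proof -
        have "Od \<inter> T0 \<union> (Od - T0) = Od" by blast
        then show ?thesis using card_Un_disjoint[of "Od \<inter> T0" "Od - T0"] finO by auto
      qed
      ultimately show ?thesis using False DC(4) cO R26 by linarith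
    qed
    ultimately have "m * (m - 2) \<le> card U"
      using main_from_D[OF assms(1,3,5) xU DC(1,2,3) _ _ T0_def] by simp
    then show False using assms(4) by simp
  qed
qed

end
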